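(* Let $U\ge 0$ be a random variable with distribution function $F(z)=P(U\le z)$, and for $p\in[0,1)$ let $\xi_p=\inf\{z\ge 0: F(z)\ge p\}$ denote its $p$-th quantile. Let $w:[0,1]\to[0,1]$ be continuous, nondecreasing, with $w(0)=0$, $w(1)=1$, and Hölder continuous of order $\alpha\in(0,1]$ with constant $H>0$, and suppose there is $\gamma\le\alpha$ with $\int_0^\infty P(U>z)^{\gamma}\,dz<\infty$. Then $$\lim_{n\to\infty}\sum_{i=0}^{n-1}\xi_{i/n}\Big(w\big(\tfrac{n-i}{n}\big)-w\big(\tfrac{n-i-1}{n}\big)\Big)=\int_0^\infty w\big(P(U>z)\big)\,dz<\infty .$$
   Context: A function $f:[0,1]\to\mathbb{R}$ is Hölder continuous of order $\alpha\in(0,1]$ with constant $H>0$ if $|f(x)-f(y)|\le H|x-y|^{\alpha}$ for all $x,y\in[0,1]$. (In the paper this is applied with $U=u^+(X)$, $w=w^+$ and with $U=u^-(X)$, $w=w^-$.) *)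

theory Defs
  imports "HOL-Probability.Probability"
begin

definition distr_fun :: "'a measure \<Rightarrow> ('a \<Rightarrow> real) \<Rightarrow> real \<Rightarrow> real" where
  "distr_fun M U z = measure M {x \<in> space M. U x \<le> z}"

definition quantile :: "'a measure \<Rightarrow> ('a \<Rightarrow> real) \<Rightarrow> real \<Rightarrow> real" where
  "quantile M U p = Inf {z. 0 \<le> z \<and> distr_fun M U z \<ge> p}"

definition hoelder_on01 :: "real \<Rightarrow> real \<Rightarrow> (real \<Rightarrow> real) \<Rightarrow> bool" where
  "hoelder_on01 \<alpha> H f \<longleftrightarrow>
     (\<forall>x\<in>{0..1}. \<forall>y\<in>{0..1}. \<bar>f x - f y\<bar> \<le> H * \<bar>x - y\<bar> powr \<alpha>)"

end

theory Submission
  imports Defs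
begin

lemma tele: "(\<Sum>k\<in>{1..m::nat}. (f k - f (k-1)::real)) = f m - f 0"
  by (induction m) auto

lemma sum_ind:
  fixes f :: "nat \<Rightarrow> real" and s :: real
  assumes "n \<ge> 1" "0 \<le> s" "s \<le> 1"
  shows "(\<Sum>k\<in>{1..n}. (f k - f (k-1)) * (if real k / real n < s then 1 else 0))
      = f (nat \<lceil>real n * s\<rceil> - 1) - f 0"
proof -
  define m where "m = nat \<lceil>real n * s\<rceil> - 1"
  have np: "real n > 0" using assms by simp
  have iff: "real k / real n < s \<longleftrightarrow> k \<le> m" if "k \<ge> 1" for k
  proof -
    have "real k / real n < s \<longleftrightarrow> real k < real n * s" using np
      by (simp add: divide_less_eq mult.commute)
    also have "\<dots> \<longleftrightarrow> int k < \<lceil>real n * s\<rceil>"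
      by (metis ceiling_le_iff not_less of_int_of_nat_eq)
    also have "\<dots> \<longleftrightarrow> k \<le> m" using that unfolding m_def by linarith
    finally show ?thesis .
  qed
  have mn: "m \<le> n"
  proof -
    have "real n * s \<le> real n" using assms np by (simp add: mult_left_le)
    hence "\<lceil>real n * s\<rceil> \<le> int n" by (simp add: ceiling_le_iff)
    thus ?thesis unfolding m_def by linarith
  qed
  have "(\<Sum>k\<in>{1..n}. (f k - f (k-1)) * (if real k / real n < s then 1 else 0))
      = (\<Sum>k\<in>{1..n}. if k \<le> m then f k - f (k-1) else 0)"
    by (intro sum.cong) (auto simp: iff)
  also have "\<dots> = (\<Sum>k\<in>{k\<in>{1..n}. k \<le> m}. f k - f (k-1))"
    by (subst sum.inter_filter) auto
  also have "{k\<in>{1..n}. k \<le> m} = {1..m}" using mn by auto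
  also have "(\<Sum>k\<in>{1..m}. f k - f (k-1)) = f m - f 0" by (rule tele)
  finally show ?thesis unfolding m_def .
qed

lemma quant_aux:
  fixes F :: "real \<Rightarrow> real"
  assumes mono: "mono F" and rc: "\<And>a. continuous (at_right a) F"
    and lim: "(F \<longlongrightarrow> 1) at_top" and p: "p < 1" and z: "0 \<le> z"
  shows "p \<le> F z \<longleftrightarrow> Inf {z. 0 \<le> z \<and> p \<le> F z} \<le> z"
    and "0 \<le> Inf {z. 0 \<le> z \<and> p \<le> F z}"
proof -
  define A where "A = {z. 0 \<le> z \<and> p \<le> F z}"
  have "eventually (\<lambda>x. F x > p) at_top" using lim p by (simp add: order_tendstoD)
  then obtain x0 where x0: "\<And>x. x \<ge> x0 \<Longrightarrow> F x > p" by (auto simp: eventually_at_top_linorder)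
  have "max x0 0 \<in> A" using x0[of "max x0 0"] unfolding A_def by auto
  hence ne': "A \<noteq> {}" by blast
  have bdd: "bdd_below A" unfolding A_def by (rule bdd_belowI[of _ 0]) simp
  have "0 \<le> Inf A" using ne' by (rule cInf_greatest) (simp add: A_def)
  thus "0 \<le> Inf {z. 0 \<le> z \<and> p \<le> F z}" unfolding A_def .
  have "p \<le> F z \<longleftrightarrow> Inf A \<le> z"
  proof
    assume "p \<le> F z" thus "Inf A \<le> z" using z bdd by (intro cInf_lower) (auto simp: A_def)
  next
    assume le: "Inf A \<le> z"
    have gt: "p \<le> F t" if "t > Inf A" for t
    proof -
      have "\<exists>a\<in>A. a < t" using cInf_less_iff[OF ne' bdd, of t] that by simp
      then obtain a where a: "a \<in> A" "a < t" by blast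
      have "F a \<le> F t" using mono a(2) by (simp add: monoD)
      thus ?thesis using a(1) by (simp add: A_def)
    qed
    show "p \<le> F z"
    proof (cases "Inf A < z")
      case True thus ?thesis by (rule gt)
    next
      case False
      hence zq: "Inf A = z" using le by simp
      have "(F \<longlongrightarrow> F z) (at_right z)" using rc[of z] by (simp add: continuous_within)
      moreover have "eventually (\<lambda>t. p \<le> F t) (at_right z)"
        using eventually_at_right_less[of z] by (rule eventually_mono) (rule gt, simp add: zq)
      ultimately show ?thesis by (intro tendsto_lowerbound) auto
    qed
  qed
  thus "p \<le> F z \<longleftrightarrow> Inf {z. 0 \<le> z \<and> p \<le> F z} \<le> z" unfolding A_def .
qed

lemma ceil_bounds:
  fixes x :: real assumes "0 \<le> x"
  shows "x - 1 \<le> real (nat \<lceil>x\<rceil> - 1)" "real (nat \<lceil>x\<rceil> - 1) \<le> x"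
proof -
  have a: "of_int \<lceil>x\<rceil> - 1 \<le> x" by simp
  have b: "x \<le> of_int \<lceil>x\<rceil>" by simp
  show "x - 1 \<le> real (nat \<lceil>x\<rceil> - 1)"
  proof (cases "\<lceil>x\<rceil> \<ge> 1")
    case True
    hence e: "int (nat \<lceil>x\<rceil> - 1) = \<lceil>x\<rceil> - 1" by linarith
    hence "real (nat \<lceil>x\<rceil> - 1) = of_int \<lceil>x\<rceil> - 1" by (metis of_int_of_nat_eq of_int_diff of_int_1)
    thus ?thesis using b by simp
  next
    case False thus ?thesis using assms b by simp
  qed
  show "real (nat \<lceil>x\<rceil> - 1) \<le> x"
  proof (cases "\<lceil>x\<rceil> \<ge> 1")
    case True
    hence e: "int (nat \<lceil>x\<rceil> - 1) = \<lceil>x\<rceil> - 1" by linarith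
    hence "real (nat \<lceil>x\<rceil> - 1) = of_int \<lceil>x\<rceil> - 1" by (metis of_int_of_nat_eq of_int_diff of_int_1)
    thus ?thesis using a by simp
  next
    case False thus ?thesis using assms by simp
  qed
qed

theorem mainTheorem2:
  fixes M :: "'a measure" and U :: "'a \<Rightarrow> real" and w :: "real \<Rightarrow> real"
    and \<alpha> H \<gamma> :: real
  assumes "prob_space M"
    and "U \<in> borel_measurable M"
    and "\<forall>x\<in>space M. 0 \<le> U x"
    and "continuous_on {0..1} w" and "mono_on {0..1} w"
    and "w ` {0..1} \<subseteq> {0..1}" and "w 0 = 0" and "w 1 = 1"
    and "0 < \<alpha>" and "\<alpha> \<le> 1" and "0 < H" and "hoelder_on01 \<alpha> H w"
    and "0 < \<gamma>" and "\<gamma> \<le> \<alpha>"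
    and "set_integrable lborel {0..}
           (\<lambda>z. measure M {x \<in> space M. U x > z} powr \<gamma>)"
  shows "set_integrable lborel {0..} (\<lambda>z. w (measure M {x \<in> space M. U x > z})) \<and>
         (\<lambda>n. \<Sum>i<n. quantile M U (real i / real n) *
              (w (real (n - i) / real n) - w (real (n - i - 1) / real n)))
           \<longlonglongrightarrow> (LINT z:{0..}|lborel. w (measure M {x \<in> space M. U x > z}))"
proof -
  interpret P: prob_space M by fact
  have Uv[measurable]: "U \<in> borel_measurable M" by fact
  define S where "S z = measure M {x \<in> space M. z < U x}" for z
  define F where "F = distr_fun M U"
  have FS: "F z = 1 - S z" for z
  proof -
    have "{x \<in> space M. U x \<le> z} = space M - {x \<in> space M. z < U x}" by auto
    hence "F z = P.prob (space M - {x \<in> space M. z < U x})" by (simp add: F_def distr_fun_def)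
    also have "\<dots> = 1 - S z" unfolding S_def by (rule P.prob_compl) measurable
    finally show ?thesis .
  qed
  interpret D: real_distribution "distr M borel U" using assms(2) by simp
  have cdfF: "cdf (distr M borel U) = F"
  proof
    fix z
    have "cdf (distr M borel U) z = measure M (U -` {..z} \<inter> space M)" by (simp add: cdf_def2 measure_distr)
    also have "U -` {..z} \<inter> space M = {x\<in>space M. U x \<le> z}" by auto
    finally show "cdf (distr M borel U) z = F z" by (simp add: F_def distr_fun_def)
  qed
  have Fmono: "mono F" unfolding mono_def using D.cdf_nondecreasing cdfF by metis
  have Frc: "continuous (at_right a) F" for a using D.cdf_is_right_cont cdfF by metis
  have Flim: "(F \<longlongrightarrow> 1) at_top" using D.cdf_lim_at_top_prob cdfF by metis
  have Q: "p < 1 \<Longrightarrow> 0 \<le> z \<Longrightarrow> p \<le> F z \<longleftrightarrow> quantile M U p \<le> z" for p z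
    unfolding quantile_def F_def[symmetric] by (rule quant_aux(1)[OF Fmono Frc Flim])
  have Q0: "p < 1 \<Longrightarrow> 0 \<le> quantile M U p" for p
    unfolding quantile_def F_def[symmetric] by (rule quant_aux(2)[OF Fmono Frc Flim _ order_refl])
  have S01: "0 \<le> S z" "S z \<le> 1" for z unfolding S_def by auto
  have Santi: "x \<le> y \<Longrightarrow> S y \<le> S x" for x y using Fmono FS by (metis diff_le_mono2 monoD diff_le_eq diff_add_cancel add_le_cancel_left)
  have Smeas[measurable]: "S \<in> borel_measurable lborel"
  proof -
    have "F \<in> borel_measurable borel" using Fmono by (rule borel_measurable_mono)
    hence "(\<lambda>z. 1 - F z) \<in> borel_measurable borel" by measurable
    moreover have "(\<lambda>z. 1 - F z) = S" using FS by auto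
    ultimately show ?thesis by simp
  qed
  have wmono: "0 \<le> a \<Longrightarrow> a \<le> b \<Longrightarrow> b \<le> 1 \<Longrightarrow> w a \<le> w b" for a b
    using assms(5) by (auto intro: mono_onD)
  have w01: "0 \<le> s \<Longrightarrow> s \<le> 1 \<Longrightarrow> 0 \<le> w s \<and> w s \<le> 1" for s
    using assms(6) by (auto simp: image_subset_iff)
  have wH: "w s \<le> H * s powr \<gamma>" if "0 \<le> s" "s \<le> 1" for s
  proof -
    have "\<bar>w s - w 0\<bar> \<le> H * \<bar>s - 0\<bar> powr \<alpha>" using assms(12) that unfolding hoelder_on01_def by (meson atLeastAtMost_iff order_refl zero_le_one)
    hence "w s \<le> H * s powr \<alpha>" using assms(7) that w01[OF that] by simp
    also have "\<dots> \<le> H * s powr \<gamma>" using powr_mono'[OF assms(14) that] assms(11) by simp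
    finally show ?thesis .
  qed
  define g where "g z = indicator {0..} z * w (S z)" for z :: real
  have wSmeas: "(\<lambda>z. w (S z)) \<in> borel_measurable lborel"
  proof -
    have "mono (\<lambda>z. - w (S z))" unfolding mono_def using Santi wmono S01 by (simp add: le_minus_iff)
    hence "(\<lambda>z. - w (S z)) \<in> borel_measurable borel" by (rule borel_measurable_mono)
    hence "(\<lambda>z. - (- w (S z))) \<in> borel_measurable borel" by measurable
    thus ?thesis by simp
  qed
  have gmeas[measurable]: "g \<in> borel_measurable lborel" unfolding g_def using wSmeas by measurable
  have gint: "integrable lborel g"
  proof (rule Bochner_Integration.integrable_bound[where f="\<lambda>z. H * (indicator {0..} z * S z powr \<gamma>)"])
    have "integrable lborel (\<lambda>z. indicator {0..} z *\<^sub>R S z powr \<gamma>)"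
      using assms(15) by (simp add: set_integrable_def S_def)
    thus "integrable lborel (\<lambda>z. H * (indicator {0..} z * S z powr \<gamma>))" by simp
    show "g \<in> borel_measurable lborel" by measurable
    show "AE x in lborel. norm (g x) \<le> norm (H * (indicator {0..} x * S x powr \<gamma>))"
      using wH[OF S01] w01[OF S01] assms(11) by (auto simp: g_def indicator_def)
  qed
  define c where "c n k = w (real k / real n) - w (real (k-1) / real n)" for n k :: nat
  define h where "h n z = (\<Sum>k\<in>{1..n}. c n k * indicator {0..<quantile M U (real (n-k) / real n)} z)" for n z
  have hmeas[measurable]: "h n \<in> borel_measurable lborel" for n unfolding h_def by measurable
  define m where "m n z = nat \<lceil>real n * S z\<rceil> - 1" for n z
  have ind: "indicator {0..<quantile M U (real (n-k) / real n)} z = (if real k / real n < S z then 1 else 0 :: real)"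
    if "0 \<le> z" "1 \<le> k" "k \<le> n" for n k z
  proof -
    have np: "real n > 0" using that by simp
    have pe: "real (n-k) / real n = 1 - real k / real n" using np that by (simp add: of_nat_diff field_simps)
    have p1: "real (n-k) / real n < 1" using pe np that by simp
    have "z \<in> {0..<quantile M U (real (n-k) / real n)} \<longleftrightarrow> \<not> (real (n-k) / real n \<le> F z)"
      using Q[OF p1 that(1)] that(1) by auto
    also have "\<dots> \<longleftrightarrow> real k / real n < S z" unfolding pe FS by auto
    finally show ?thesis by (simp add: indicator_def)
  qed
  have hform: "h n z = w (real (m n z) / real n)" if "0 \<le> z" "1 \<le> n" for n z
  proof -
    have "h n z = (\<Sum>k\<in>{1..n}. ((\<lambda>k. w (real k / real n)) k - (\<lambda>k. w (real k / real n)) (k-1)) *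
          (if real k / real n < S z then 1 else 0))"
      unfolding h_def
    proof (rule sum.cong[OF refl])
      fix k assume k: "k \<in> {1..n}"
      have e: "indicator {0..<quantile M U (real (n-k) / real n)} z = (if real k / real n < S z then 1 else 0 :: real)"
        using ind[OF that(1), of k n] k by simp
      show "c n k * indicator {0..<quantile M U (real (n-k) / real n)} z =
          ((\<lambda>k. w (real k / real n)) k - (\<lambda>k. w (real k / real n)) (k-1)) *
          (if real k / real n < S z then 1 else 0)"
        unfolding e c_def by (simp only:)
    qed
    also have "\<dots> = w (real (m n z) / real n) - w (real 0 / real n)"
      unfolding m_def by (rule sum_ind[OF that(2) S01])
    finally show ?thesis using assms(7) by simp
  qed
  have hneg: "h n z = 0" if "z < 0" for n z
    unfolding h_def using that by (simp add: indicator_def)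
  have mbounds: "S z - 1 / real n \<le> real (m n z) / real n \<and> real (m n z) / real n \<le> S z"
    if "1 \<le> n" for n z
  proof -
    have np: "real n > 0" using that by simp
    have x0: "0 \<le> real n * S z" using S01 by simp
    note cb = ceil_bounds[OF x0]
    have "(real n * S z - 1) / real n \<le> real (m n z) / real n"
      using cb(1) np unfolding m_def by (intro divide_right_mono) auto
    moreover have "real (m n z) / real n \<le> (real n * S z) / real n"
      using cb(2) np unfolding m_def by (intro divide_right_mono) auto
    ultimately show ?thesis using np by (simp add: field_simps)
  qed
  have m01: "real (m n z) / real n \<in> {0..1}" for n z
  proof (cases "n = 0")
    case True thus ?thesis by simp
  next
    case False
    have a: "real (m n z) / real n \<le> 1" using mbounds[of n z] S01[of z] False by linarith
    have b: "0 \<le> real (m n z) / real n" by simp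
    show ?thesis unfolding atLeastAtMost_iff by (rule conjI[OF b a])
  qed
  have lim_pt: "(\<lambda>n. h n z) \<longlonglongrightarrow> g z" for z
  proof (cases "0 \<le> z")
    case False thus ?thesis using hneg by (simp add: g_def)
  next
    case True
    have l1: "(\<lambda>n. S z - 1 / real n) \<longlonglongrightarrow> S z"
      using tendsto_diff[OF tendsto_const lim_inverse_n'] by simp
    have l2: "(\<lambda>n. real (m n z) / real n) \<longlonglongrightarrow> S z"
      by (rule tendsto_sandwich[OF _ _ l1 tendsto_const])
         (use mbounds in \<open>auto simp: eventually_sequentially intro!: exI[of _ 1]\<close>)
    have l3: "(\<lambda>n. w (real (m n z) / real n)) \<longlonglongrightarrow> w (S z)"
      by (rule continuous_on_tendsto_compose[OF assms(4) l2]) (use S01 m01 in auto)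
    have ev: "eventually (\<lambda>n. w (real (m n z) / real n) = h n z) sequentially"
      using hform[OF True] by (auto simp: eventually_sequentially intro!: exI[of _ 1])
    show ?thesis using Lim_transform_eventually[OF l3 ev] True by (simp add: g_def)
  qed
  have bound: "norm (h n z) \<le> g z" for n z
  proof (cases "0 \<le> z")
    case False thus ?thesis using hneg by (simp add: g_def)
  next
    case True
    show ?thesis
    proof (cases "n = 0")
      case True thus ?thesis using \<open>0 \<le> z\<close> w01[OF S01] by (simp add: h_def g_def)
    next
      case False
      have "0 \<le> w (real (m n z) / real n)" using w01 m01 by auto
      moreover have "w (real (m n z) / real n) \<le> w (S z)"
        using mbounds[of n z] False m01[of n z] S01[of z] by (intro wmono) auto
      ultimately show ?thesis using hform[of z n] True False by (simp add: g_def)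
    qed
  qed
  have conv: "(\<lambda>n. integral\<^sup>L lborel (h n)) \<longlonglongrightarrow> integral\<^sup>L lborel g"
    by (rule integral_dominated_convergence[where w=g]) (use gint lim_pt bound in auto)
  have intval: "integral\<^sup>L lborel (h n) = (\<Sum>i<n. quantile M U (real i / real n) *
              (w (real (n - i) / real n) - w (real (n - i - 1) / real n)))" if "1 \<le> n" for n
  proof -
    have qn: "0 \<le> quantile M U (real (n-k) / real n)" if "1 \<le> k" "k \<le> n" for k
      using that \<open>1 \<le> n\<close> by (intro Q0) (simp add: of_nat_diff field_simps)
    have "integral\<^sup>L lborel (h n) = (\<Sum>k\<in>{1..n}. c n k * quantile M U (real (n-k) / real n))"
    proof -
      have "integral\<^sup>L lborel (h n) = (\<Sum>k\<in>{1..n}. integral\<^sup>L lborel (\<lambda>z. c n k * indicator {0..<quantile M U (real (n-k) / real n)} z))"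
        unfolding h_def by (rule Bochner_Integration.integral_sum) (use qn in auto)
      also have "\<dots> = (\<Sum>k\<in>{1..n}. c n k * quantile M U (real (n-k) / real n))"
        by (rule sum.cong[OF refl]) (use qn in auto)
      finally show ?thesis .
    qed
    also have "\<dots> = (\<Sum>i<n. quantile M U (real i / real n) *
              (w (real (n - i) / real n) - w (real (n - i - 1) / real n)))"
      by (rule sum.reindex_bij_witness[of _ "\<lambda>k. n - k" "\<lambda>i. n - i"]) (auto simp: c_def)
    finally show ?thesis .
  qed
  have gset: "(\<lambda>z. indicator {0..} z *\<^sub>R w (measure M {x \<in> space M. U x > z})) = g"
    by (auto simp: g_def S_def)
  show ?thesis
  proof
    show "set_integrable lborel {0..} (\<lambda>z. w (measure M {x \<in> space M. U x > z}))"
      unfolding set_integrable_def gset by (rule gint)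
    have "(\<lambda>n. integral\<^sup>L lborel (h n)) \<longlonglongrightarrow> (LINT z:{0..}|lborel. w (measure M {x \<in> space M. U x > z}))"
      using conv unfolding set_lebesgue_integral_def gset .
    moreover have "eventually (\<lambda>n. integral\<^sup>L lborel (h n) = (\<Sum>i<n. quantile M U (real i / real n) *
              (w (real (n - i) / real n) - w (real (n - i - 1) / real n)))) sequentially"
      using intval by (auto simp: eventually_sequentially intro!: exI[of _ 1])
    ultimately show "(\<lambda>n. \<Sum>i<n. quantile M U (real i / real n) *
              (w (real (n - i) / real n) - w (real (n - i - 1) / real n)))
           \<longlonglongrightarrow> (LINT z:{0..}|lborel. w (measure M {x \<in> space M. U x > z}))"
      by (rule Lim_transform_eventually)
  qed
qed

end
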